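(* Let $\mathbf G$ be a torsion-free group, and let $x,y,z\in G$ be such that $x,y\in O_{\mathbf G}(z)$, $x\to y$ in $\vec{\mathcal G}^\pm(\mathbf G)$, and $y\notin\{x,x^{-1}\}$. Let $\mathbf H$ be a group and $\varphi:G\to H$ an isomorphism from $\mathcal G^\pm(\mathbf G)$ to $\mathcal G^\pm(\mathbf H)$. Then $\varphi(x)\to\varphi(y)$ in $\vec{\mathcal G}^\pm(\mathbf H)$ if and only if $\varphi(O_{\mathbf G}(z))=O_{\mathbf H}(\varphi(z))$.
   Context: For a group $\mathbf G$, the directed $Z^\pm$-power graph $\vec{\mathcal G}^\pm(\mathbf G)$ has vertex set $G$ and an arc $x\to y$ for distinct $x,y$ iff $y=x^n$ for some $n\in\mathbb Z\setminus\{0\}$; its underlying simple graph is the $Z^\pm$-power graph $\mathcal G^\pm(\mathbf G)$. For $z\in G$, $O_{\mathbf G}(z)=\{y\in G\setminus\{z^{-1}\}\mid z\to y\text{ in }\vec{\mathcal G}^\pm(\mathbf G)\}$. *)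

theory Defs
  imports "HOL-Algebra.Group"
begin

definition zpow_arc :: "('a, 'b) monoid_scheme \<Rightarrow> 'a \<Rightarrow> 'a \<Rightarrow> bool" where
  "zpow_arc G x y \<longleftrightarrow> x \<in> carrier G \<and> y \<in> carrier G \<and> x \<noteq> y \<and>
     (\<exists>n::int. n \<noteq> 0 \<and> y = x [^]\<^bsub>G\<^esub> n)"

definition zpow_adj :: "('a, 'b) monoid_scheme \<Rightarrow> 'a \<Rightarrow> 'a \<Rightarrow> bool" where
  "zpow_adj G x y \<longleftrightarrow> zpow_arc G x y \<or> zpow_arc G y x"

definition O_set :: "('a, 'b) monoid_scheme \<Rightarrow> 'a \<Rightarrow> 'a set" where
  "O_set G z = {y \<in> carrier G. y \<noteq> inv\<^bsub>G\<^esub> z \<and> zpow_arc G z y}"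

definition torsion_free :: "('a, 'b) monoid_scheme \<Rightarrow> bool" where
  "torsion_free G \<longleftrightarrow> (\<forall>x\<in>carrier G. \<forall>n::nat. n > 0 \<longrightarrow> x [^]\<^bsub>G\<^esub> n = \<one>\<^bsub>G\<^esub> \<longrightarrow> x = \<one>\<^bsub>G\<^esub>)"

definition zpow_graph_iso :: "('a, 'b) monoid_scheme \<Rightarrow> ('c, 'd) monoid_scheme \<Rightarrow> ('a \<Rightarrow> 'c) \<Rightarrow> bool" where
  "zpow_graph_iso G H \<phi> \<longleftrightarrow> bij_betw \<phi> (carrier G) (carrier H) \<and>
     (\<forall>u\<in>carrier G. \<forall>v\<in>carrier G. zpow_adj G u v \<longleftrightarrow> zpow_adj H (\<phi> u) (\<phi> v))"

end

theory Submission imports Defs begin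

definition pw :: "('a, 'b) monoid_scheme \<Rightarrow> 'a \<Rightarrow> 'a \<Rightarrow> bool" where
  "pw K a b \<longleftrightarrow> a \<in> carrier K \<and> a \<noteq> \<one>\<^bsub>K\<^esub> \<and> (\<exists>n::int. \<bar>n\<bar> \<ge> 2 \<and> b = a [^]\<^bsub>K\<^esub> n)"

definition cn :: "('a, 'b) monoid_scheme \<Rightarrow> 'a \<Rightarrow> 'a set" where
  "cn K a = insert a {b. zpow_adj K a b}"

lemma adj_sym: "zpow_adj K a b = zpow_adj K b a"
  unfolding zpow_adj_def by auto

lemma cn_carrier: "a \<in> carrier K \<Longrightarrow> cn K a \<subseteq> carrier K"
  unfolding cn_def zpow_adj_def zpow_arc_def by auto

lemma abs_mul_ge2: "\<bar>i::int\<bar> \<ge> 2 \<Longrightarrow> \<bar>j\<bar> \<ge> 2 \<Longrightarrow> \<bar>i*j\<bar> \<ge> 2"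
proof -
  assume i: "\<bar>i::int\<bar> \<ge> 2" and j: "\<bar>j\<bar> \<ge> 2"
  have "2*\<bar>j\<bar> \<le> \<bar>i\<bar>*\<bar>j\<bar>" by (rule mult_right_mono) (use i in auto)
  then show ?thesis using j by (simp add: abs_mult)
qed

locale tfg = group G for G (structure) +
  assumes tf: "torsion_free G"
begin

lemma pow_inj:
  assumes a: "a \<in> carrier G" "a \<noteq> \<one>" and e0: "a [^] (p::int) = a [^] q"
  shows "p = q"
proof (rule ccontr)
  assume pq: "p \<noteq> q"
  have e: "a [^] (p - q) = \<one>" using a e0 by (simp add: int_pow_diff)
  have "\<exists>n::nat. n > 0 \<and> a [^] n = \<one>"
  proof (cases "p - q > 0")
    case True
    then have "a [^] nat (p-q) = \<one>" using e pow_nat[of "p-q"] by simp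
    then show ?thesis using True by (intro exI[of _ "nat(p-q)"]) auto
  next
    case False
    then have qp: "q - p > 0" using pq by simp
    have "a [^] (q-p) = inv (a[^](p-q))" using int_pow_neg[of a "p-q"] a(1) by simp
    then have "a[^](q-p) = \<one>" using e by simp
    then have "a [^] nat (q-p) = \<one>" using qp pow_nat[of "q-p"] by simp
    then show ?thesis using qp by (intro exI[of _ "nat(q-p)"]) auto
  qed
  then show False using tf a unfolding torsion_free_def by auto
qed

lemma pow_eq_iff: "a \<in> carrier G \<Longrightarrow> a \<noteq> \<one> \<Longrightarrow> (a [^] (p::int) = a [^] q) = (p = q)"
  using pow_inj by blast

lemma one_isolated: "\<not> zpow_adj G \<one> b"
proof
  assume "zpow_adj G \<one> b"
  then show False
  proof (unfold zpow_adj_def, elim disjE)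
    assume "zpow_arc G \<one> b" then show False unfolding zpow_arc_def by auto
  next
    assume "zpow_arc G b \<one>"
    then obtain n::int where n: "n \<noteq> 0" "\<one> = b [^] n" "b \<in> carrier G" "b \<noteq> \<one>"
      unfolding zpow_arc_def by auto
    then have "b [^] n = b [^] (0::int)" by simp
    then show False using pow_inj n by blast
  qed
qed

lemma pw_props:
  assumes "pw G a b"
  shows "zpow_arc G a b" "b \<noteq> inv a" "b \<noteq> \<one>" "b \<in> carrier G" "a \<in> carrier G" "a \<noteq> \<one>"
    "zpow_adj G a b" "a \<noteq> b"
proof -
  obtain n::int where a: "a \<in> carrier G" "a \<noteq> \<one>" and n: "\<bar>n\<bar> \<ge> 2" "b = a [^] n"
    using assms unfolding pw_def by auto
  have i2: "a [^] (-1::int) = inv a" using a by (simp add: int_pow_neg)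
  show "a \<noteq> b"
  proof
    assume "a = b"
    then have "a [^] (1::int) = a [^] n" using a n by simp
    then have "n = 1" using pow_inj a by blast
    then show False using n by simp
  qed
  show "zpow_arc G a b" unfolding zpow_arc_def using a n \<open>a \<noteq> b\<close> by (auto intro!: exI[of _ n])
  then show "zpow_adj G a b" unfolding zpow_adj_def by simp
  show "b \<noteq> inv a"
  proof
    assume "b = inv a"
    then have "a [^] n = a [^] (-1::int)" using n i2 by simp
    then have "n = -1" using pow_inj a by blast
    then show False using n by simp
  qed
  show "b \<noteq> \<one>"
  proof
    assume "b = \<one>"
    then have "a [^] n = a [^] (0::int)" using n by simp
    then have "n = 0" using pow_inj a by blast
    then show False using n by simp
  qed
  show "b \<in> carrier G" "a \<in> carrier G" "a \<noteq> \<one>" using a n by auto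
qed

lemma arc_pw:
  assumes "zpow_arc G a b" "b \<noteq> inv a"
  shows "pw G a b"
proof -
  obtain n::int where n: "a \<in> carrier G" "b \<in> carrier G" "a \<noteq> b" "n \<noteq> 0" "b = a [^] n"
    using assms unfolding zpow_arc_def by auto
  have a1: "a \<noteq> \<one>" using n by auto
  have "n \<noteq> 1" using n by auto
  moreover have "n \<noteq> -1" using n assms(2) by (auto simp: int_pow_neg)
  ultimately have "\<bar>n\<bar> \<ge> 2" using n(4) by linarith
  then show ?thesis unfolding pw_def using n a1 by auto
qed

lemma adj_cases:
  assumes "zpow_adj G a b"
  shows "pw G a b \<or> pw G b a \<or> b = inv a"
proof -
  have ab: "a \<in> carrier G" "b \<in> carrier G" using assms unfolding zpow_adj_def zpow_arc_def by auto
  from assms show ?thesis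
  proof (unfold zpow_adj_def, elim disjE)
    assume h: "zpow_arc G a b"
    show ?thesis using arc_pw[OF h] by blast
  next
    assume h: "zpow_arc G b a"
    show ?thesis
    proof (cases "a = inv b")
      case True then have "b = inv a" using ab by simp
      then show ?thesis by simp
    next
      case False then show ?thesis using arc_pw[OF h] by blast
    qed
  qed
qed

lemma pw_trans: "pw G a b \<Longrightarrow> pw G b c \<Longrightarrow> pw G a c"
proof -
  assume h1: "pw G a b" and h2: "pw G b c"
  obtain i::int where i: "\<bar>i\<bar> \<ge> 2" "b = a [^] i" and a: "a \<in> carrier G" "a \<noteq> \<one>"
    using h1 unfolding pw_def by auto
  obtain j::int where j: "\<bar>j\<bar> \<ge> 2" "c = b [^] j" using h2 unfolding pw_def by auto
  have "c = a [^] (i*j)" using i j a by (simp add: int_pow_pow)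
  moreover have "\<bar>i*j\<bar> \<ge> 2" using i j by (intro abs_mul_ge2) auto
  ultimately show ?thesis unfolding pw_def using a by auto
qed

lemma pw_asym: "pw G a b \<Longrightarrow> \<not> pw G b a"
proof
  assume h1: "pw G a b" and h2: "pw G b a"
  obtain i::int where i: "\<bar>i\<bar> \<ge> 2" "b = a [^] i" and a: "a \<in> carrier G" "a \<noteq> \<one>"
    using h1 unfolding pw_def by auto
  obtain j::int where j: "\<bar>j\<bar> \<ge> 2" "a = b [^] j" using h2 unfolding pw_def by auto
  have "a = (a [^] i) [^] j" using i(2) j(2) by metis
  then have "a [^] (1::int) = a [^] (i*j)" using a by (simp add: int_pow_pow)
  then have "1 = i * j" using pow_inj a by blast
  moreover have "\<bar>i*j\<bar> \<ge> 2" using i j by (intro abs_mul_ge2) auto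
  ultimately show False by simp
qed

lemma adj_pow:
  assumes "a \<in> carrier G" "a \<noteq> \<one>" "(i::int) \<noteq> 0" "m \<noteq> 0" "i \<noteq> m" "i dvd m"
  shows "zpow_adj G (a [^] i) (a [^] m)"
proof -
  obtain k where k: "m = i * k" using assms by (auto elim: dvdE)
  have "k \<noteq> 0" using k assms by auto
  moreover have "a [^] m = (a [^] i) [^] k" using k assms by (simp add: int_pow_pow)
  moreover have "a [^] i \<noteq> a [^] m" using assms pow_eq_iff by simp
  ultimately show ?thesis unfolding zpow_adj_def zpow_arc_def using assms by auto
qed

lemma nonadj_pow:
  assumes "a \<in> carrier G" "a \<noteq> \<one>" "(i::int) \<noteq> 0" "m \<noteq> 0" "\<not> i dvd m" "\<not> m dvd i"
  shows "\<not> zpow_adj G (a [^] i) (a [^] m)"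
proof
  assume "zpow_adj G (a [^] i) (a [^] m)"
  then show False
  proof (unfold zpow_adj_def, elim disjE)
    assume "zpow_arc G (a [^] i) (a [^] m)"
    then obtain k::int where "a [^] m = (a [^] i) [^] k" unfolding zpow_arc_def by auto
    then have "a [^] m = a [^] (i*k)" using assms by (simp add: int_pow_pow)
    then have "m = i * k" using pow_inj assms by blast
    then show False using assms by auto
  next
    assume "zpow_arc G (a [^] m) (a [^] i)"
    then obtain k::int where "a [^] i = (a [^] m) [^] k" unfolding zpow_arc_def by auto
    then have "a [^] i = a [^] (m*k)" using assms by (simp add: int_pow_pow)
    then have "i = m * k" using pow_inj assms by blast
    then show False using assms by auto
  qed
qed

lemma top:
  assumes "pw G a b" "pw G a c"
  shows "\<exists>d\<in>carrier G. d \<in> cn G a \<and> d \<notin> cn G b \<and> d \<notin> cn G c"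
proof -
  obtain i::int where i: "\<bar>i\<bar> \<ge> 2" "b = a [^] i" and a: "a \<in> carrier G" "a \<noteq> \<one>"
    using assms unfolding pw_def by auto
  obtain j::int where j: "\<bar>j\<bar> \<ge> 2" "c = a [^] j" using assms unfolding pw_def by auto
  define m where "m = \<bar>i*j\<bar> + 1"
  have "2*\<bar>i\<bar> \<le> \<bar>j\<bar>*\<bar>i\<bar>" by (rule mult_right_mono) (use j in auto)
  moreover have "2*\<bar>j\<bar> \<le> \<bar>i\<bar>*\<bar>j\<bar>" by (rule mult_right_mono) (use i in auto)
  ultimately have ij: "\<bar>i*j\<bar> \<ge> 2*\<bar>i\<bar>" "\<bar>i*j\<bar> \<ge> 2*\<bar>j\<bar>" by (simp_all add: abs_mult mult.commute)
  have mi: "m > \<bar>i\<bar>" "m > \<bar>j\<bar>" "m > 1" using ij i j unfolding m_def by linarith+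
  have nd: "\<not> k dvd m" if "\<bar>k\<bar> \<ge> 2" "k dvd i*j" for k :: int
  proof
    assume "k dvd m"
    moreover have "k dvd \<bar>i*j\<bar>" using that by simp
    ultimately have "k dvd 1" unfolding m_def by (metis add_diff_cancel_left' dvd_diff)
    then show False using that by auto
  qed
  have nd2: "\<not> m dvd k" if "\<bar>k\<bar> < m" "k \<noteq> 0" for k :: int
    using dvd_imp_le_int[of k m] that mi by auto
  have d1: "a [^] m \<in> cn G a"
    using adj_pow[OF a, of 1 m] mi a unfolding cn_def by auto
  have d2: "a [^] m \<notin> cn G b"
  proof -
    have "a [^] m \<noteq> b" using i mi pow_eq_iff a by auto
    moreover have "\<not> zpow_adj G b (a [^] m)"
      unfolding i(2) using nonadj_pow[OF a, of i m] nd[of i] nd2[of i] i mi by auto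
    ultimately show ?thesis unfolding cn_def by auto
  qed
  have d3: "a [^] m \<notin> cn G c"
  proof -
    have "a [^] m \<noteq> c" using j mi pow_eq_iff a by auto
    moreover have "\<not> zpow_adj G c (a [^] m)"
      unfolding j(2) using nonadj_pow[OF a, of j m] nd[of j] nd2[of j] j mi by auto
    ultimately show ?thesis unfolding cn_def by auto
  qed
  show ?thesis using d1 d2 d3 a by blast
qed

lemma mid:
  assumes "pw G a b" "pw G b c"
  shows "cn G b \<subseteq> cn G a \<union> cn G c"
proof
  fix e assume e: "e \<in> cn G b"
  obtain i::int where i: "\<bar>i\<bar> \<ge> 2" "b = a [^] i" and a: "a \<in> carrier G" "a \<noteq> \<one>"
    using assms unfolding pw_def by auto
  obtain j::int where j: "\<bar>j\<bar> \<ge> 2" "c = b [^] j" and b: "b \<in> carrier G"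
    using assms unfolding pw_def by auto
  show "e \<in> cn G a \<union> cn G c"
  proof (cases "e = b")
    case True then show ?thesis using pw_props(7)[OF assms(1)] unfolding cn_def by auto
  next
    case False
    then have "zpow_adj G b e" using e unfolding cn_def by auto
    then show ?thesis
    proof (unfold zpow_adj_def, elim disjE)
      assume "zpow_arc G b e"
      then obtain k::int where k: "k \<noteq> 0" "e = b [^] k" "e \<in> carrier G" unfolding zpow_arc_def by auto
      then have "e = a [^] (i*k)" using i a by (simp add: int_pow_pow)
      moreover have "i * k \<noteq> 0" using i k by auto
      ultimately have "e = a \<or> zpow_arc G a e" using a k by (auto simp: zpow_arc_def intro!: exI[of _ "i*k"])
      then show ?thesis unfolding cn_def zpow_adj_def by auto
    next
      assume "zpow_arc G e b"
      then obtain k::int where k: "k \<noteq> 0" "b = e [^] k" "e \<in> carrier G" unfolding zpow_arc_def by auto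
      then have "c = e [^] (k*j)" using j by (simp add: int_pow_pow)
      moreover have "k * j \<noteq> 0" using j k by auto
      moreover have "c \<in> carrier G" using j b by simp
      ultimately have "e = c \<or> zpow_arc G e c" using k by (auto simp: zpow_arc_def intro!: exI[of _ "k*j"])
      then show ?thesis unfolding cn_def zpow_adj_def by auto
    qed
  qed
qed

lemma twin_ne: "pw G a b \<Longrightarrow> cn G a \<noteq> cn G b"
  using top[of a b b] by auto

lemma arc_inv:
  assumes a: "a \<in> carrier G" and c: "c \<noteq> a" "c \<noteq> inv a"
  shows "zpow_arc G a c = zpow_arc G (inv a) c" "zpow_arc G c a = zpow_arc G c (inv a)"
proof -
  have "(\<exists>n::int. n \<noteq> 0 \<and> c = a [^] n) = (\<exists>n::int. n \<noteq> 0 \<and> c = inv a [^] n)"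
  proof
    assume "\<exists>n::int. n \<noteq> 0 \<and> c = a [^] n"
    then obtain n::int where "n \<noteq> 0" "c = a [^] n" by auto
    then show "\<exists>n::int. n \<noteq> 0 \<and> c = inv a [^] n" using a
      by (intro exI[of _ "-n"]) (simp add: int_pow_inv int_pow_neg)
  next
    assume "\<exists>n::int. n \<noteq> 0 \<and> c = inv a [^] n"
    then obtain n::int where "n \<noteq> 0" "c = inv a [^] n" by auto
    then show "\<exists>n::int. n \<noteq> 0 \<and> c = a [^] n" using a
      by (intro exI[of _ "-n"]) (simp add: int_pow_inv int_pow_neg)
  qed
  then show "zpow_arc G a c = zpow_arc G (inv a) c" unfolding zpow_arc_def using a c by auto
  have "(\<exists>n::int. n \<noteq> 0 \<and> a = c [^] n) = (\<exists>n::int. n \<noteq> 0 \<and> inv a = c [^] n)" if cc: "c \<in> carrier G"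
  proof
    assume "\<exists>n::int. n \<noteq> 0 \<and> a = c [^] n"
    then obtain n::int where "n \<noteq> 0" "a = c [^] n" by auto
    then show "\<exists>n::int. n \<noteq> 0 \<and> inv a = c [^] n" using cc
      by (intro exI[of _ "-n"]) (simp add: int_pow_neg)
  next
    assume "\<exists>n::int. n \<noteq> 0 \<and> inv a = c [^] n"
    then obtain n::int where "n \<noteq> 0" "inv a = c [^] n" by auto
    then have "a = inv (c [^] n)" using a cc by (metis inv_inv)
    then show "\<exists>n::int. n \<noteq> 0 \<and> a = c [^] n" using cc \<open>n \<noteq> 0\<close>
      by (intro exI[of _ "-n"]) (simp add: int_pow_neg)
  qed
  then show "zpow_arc G c a = zpow_arc G c (inv a)" unfolding zpow_arc_def using a c by auto
qed

lemma inv_twin: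
  assumes a: "a \<in> carrier G"
  shows "cn G (inv a) = cn G a"
proof (cases "a = \<one>")
  case True then show ?thesis by simp
next
  case False
  have ne: "inv a \<noteq> a"
  proof
    assume "inv a = a"
    then have "a [^] (-1::int) = a [^] (1::int)" using a by (simp add: int_pow_neg)
    then show False using pow_inj[OF a False] by force
  qed
  have arc1: "zpow_arc G a (inv a)" unfolding zpow_arc_def using a ne
    by (auto intro!: exI[of _ "-1"] simp: int_pow_neg)
  have "x \<in> cn G (inv a) \<longleftrightarrow> x \<in> cn G a" for x
  proof -
    consider "x = a" | "x = inv a" | "x \<noteq> a" "x \<noteq> inv a" by blast
    then show ?thesis
    proof cases
      case 1 then show ?thesis using arc1 unfolding cn_def zpow_adj_def by auto
    next
      case 2 then show ?thesis using arc1 unfolding cn_def zpow_adj_def by auto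
    next
      case 3 then show ?thesis using arc_inv[OF a 3] unfolding cn_def zpow_adj_def by auto
    qed
  qed
  then show ?thesis by blast
qed

lemma adj_cases':
  assumes "zpow_adj G a b" "cn G a \<noteq> cn G b"
  shows "pw G a b \<or> pw G b a"
proof -
  have "a \<in> carrier G" using assms unfolding zpow_adj_def zpow_arc_def by auto
  then show ?thesis using adj_cases[OF assms(1)] inv_twin assms(2) by auto
qed

lemma O_iff:
  assumes z: "z \<in> carrier G"
  shows "t \<in> O_set G z \<longleftrightarrow> pw G z t"
proof
  assume "t \<in> O_set G z"
  then show "pw G z t" unfolding O_set_def using arc_pw by auto
next
  assume "pw G z t"
  then show "t \<in> O_set G z" unfolding O_set_def using pw_props by auto
qed

lemma common:
  assumes "pw G z x" "pw G z t"
  shows "\<exists>e. pw G x e \<and> pw G t e \<and> pw G z e"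
proof -
  obtain a::int where a: "\<bar>a\<bar> \<ge> 2" "x = z [^] a" and z: "z \<in> carrier G" "z \<noteq> \<one>"
    using assms unfolding pw_def by auto
  obtain k::int where k: "\<bar>k\<bar> \<ge> 2" "t = z [^] k" using assms unfolding pw_def by auto
  have e1: "x [^] k = z [^] (a*k)" using a z by (simp add: int_pow_pow)
  have e2: "t [^] a = z [^] (a*k)" using k z by (simp add: int_pow_pow mult.commute)
  have "pw G x (x [^] k)" unfolding pw_def using pw_props[OF assms(1)] k by auto
  moreover have "pw G t (x [^] k)" unfolding pw_def using pw_props[OF assms(2)] a e1 e2 by auto
  ultimately show ?thesis using pw_trans[OF assms(1)] by blast
qed

lemma fin:
  assumes "pw G w p" "pw G q p"
  shows "finite ((cn G p \<inter> O_set G w) - cn G q)"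
proof -
  obtain c::int where c: "\<bar>c\<bar> \<ge> 2" "p = w [^] c" and w: "w \<in> carrier G" "w \<noteq> \<one>"
    using assms unfolding pw_def by auto
  obtain n::int where n: "\<bar>n\<bar> \<ge> 2" "p = q [^] n" and q: "q \<in> carrier G" "q \<noteq> \<one>"
    using assms unfolding pw_def by auto
  have "(cn G p \<inter> O_set G w) - cn G q \<subseteq> (\<lambda>d. w [^] d) ` {d. d dvd c}"
  proof
    fix e assume e: "e \<in> (cn G p \<inter> O_set G w) - cn G q"
    then have "pw G w e" using O_iff w by auto
    then obtain k::int where k: "e = w [^] k" unfolding pw_def by auto
    have "e = p \<or> zpow_arc G p e \<or> zpow_arc G e p" using e unfolding cn_def zpow_adj_def by auto
    then show "e \<in> (\<lambda>d. w [^] d) ` {d. d dvd c}"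
    proof (elim disjE)
      assume "e = p" then show ?thesis using c by auto
    next
      assume "zpow_arc G p e"
      then obtain j::int where j: "j \<noteq> 0" "e = p [^] j" "e \<in> carrier G" unfolding zpow_arc_def by auto
      then have "e = q [^] (n*j)" using n q by (simp add: int_pow_pow)
      moreover have "n*j \<noteq> 0" using n j by auto
      ultimately have "e = q \<or> zpow_arc G q e" using q j by (auto simp: zpow_arc_def intro!: exI[of _ "n*j"])
      then have "e \<in> cn G q" unfolding cn_def zpow_adj_def by auto
      then show ?thesis using e by auto
    next
      assume "zpow_arc G e p"
      then obtain j::int where j: "p = e [^] j" unfolding zpow_arc_def by auto
      then have "w [^] c = w [^] (k*j)" using c k w by (simp add: int_pow_pow)
      then have "c = k * j" using pow_inj w by blast
      then show ?thesis using k by auto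
    qed
  qed
  moreover have "c \<noteq> 0" using c by auto
  then have "finite ((\<lambda>d. w [^] d) ` {d. d dvd c})" by simp
  ultimately show ?thesis by (rule finite_subset)
qed

lemma inf:
  assumes "pw G z x" "pw G x y"
  shows "infinite ((cn G x \<inter> O_set G z) - cn G y)"
proof
  assume fin: "finite ((cn G x \<inter> O_set G z) - cn G y)"
  obtain a::int where a: "\<bar>a\<bar> \<ge> 2" "x = z [^] a" and z: "z \<in> carrier G" "z \<noteq> \<one>"
    using assms unfolding pw_def by auto
  obtain n::int where n: "\<bar>n\<bar> \<ge> 2" "y = x [^] n" and x: "x \<in> carrier G" "x \<noteq> \<one>"
    using assms unfolding pw_def by auto
  define m where "m = (\<lambda>k::nat. \<bar>n\<bar> * (int k + 1) + 1)"
  define f where "f = (\<lambda>k. x [^] m k)"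
  have mg: "m k > \<bar>n\<bar>" for k unfolding m_def using n by (simp add: mult_le_cancel_left1)
  have inj: "inj f"
  proof (rule injI)
    fix k l assume "f k = f l"
    then have "m k = m l" unfolding f_def using pow_inj x by blast
    then show "k = l" unfolding m_def using n by auto
  qed
  have "range f \<subseteq> (cn G x \<inter> O_set G z) - cn G y"
  proof
    fix e assume "e \<in> range f"
    then obtain k where k: "e = x [^] m k" unfolding f_def by auto
    have nd: "\<not> n dvd m k"
    proof
      assume "n dvd m k"
      moreover have "n dvd \<bar>n\<bar> * (int k + 1)" by simp
      ultimately have "n dvd 1" unfolding m_def by (metis add_diff_cancel_left' dvd_diff)
      then show False using n by auto
    qed
    have nd2: "\<not> m k dvd n"
    proof
      assume "m k dvd n"
      then have "\<bar>m k\<bar> \<le> \<bar>n\<bar>" using dvd_imp_le_int n by force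
      then show False using mg[of k] by linarith
    qed
    have "x [^] m k \<in> cn G x" using adj_pow[OF x, of 1 "m k"] mg[of k] n x unfolding cn_def by auto
    moreover have "x [^] m k \<notin> cn G y"
    proof -
      have "x [^] m k \<noteq> y" using n mg[of k] pow_eq_iff x by auto
      moreover have "\<not> zpow_adj G y (x [^] m k)"
        unfolding n(2) using nonadj_pow[OF x, of n "m k"] nd nd2 n mg[of k] by auto
      ultimately show ?thesis unfolding cn_def by auto
    qed
    moreover have "pw G z (x [^] m k)"
    proof -
      have "x [^] m k = z [^] (a * m k)" using a z by (simp add: int_pow_pow)
      moreover have "\<bar>a * m k\<bar> \<ge> 2" using a mg[of k] n by (intro abs_mul_ge2) auto
      ultimately show ?thesis unfolding pw_def using z by auto
    qed
    ultimately show "e \<in> (cn G x \<inter> O_set G z) - cn G y" using k O_iff z by auto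
  qed
  then have "finite (range f)" using fin finite_subset by blast
  then have "finite (UNIV :: nat set)" using inj finite_imageD by blast
  then show False by simp
qed

end

lemma iso_props:
  assumes "zpow_graph_iso G H \<phi>"
  shows "inj_on \<phi> (carrier G)" "\<phi> ` carrier G = carrier H"
    "\<And>u v. u \<in> carrier G \<Longrightarrow> v \<in> carrier G \<Longrightarrow> zpow_adj G u v = zpow_adj H (\<phi> u) (\<phi> v)"
  using assms unfolding zpow_graph_iso_def bij_betw_def by auto

lemma iso_img:
  assumes "zpow_graph_iso G H \<phi>" "a \<in> carrier G"
  shows "\<phi> a \<in> carrier H"
proof -
  have "\<phi> ` carrier G = carrier H" using assms(1) unfolding zpow_graph_iso_def bij_betw_def by blast
  moreover have "\<phi> a \<in> \<phi> ` carrier G" using assms(2) by (rule imageI)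
  ultimately show ?thesis by simp
qed

lemma iso_surj:
  assumes "zpow_graph_iso G H \<phi>" "e \<in> carrier H"
  obtains d where "d \<in> carrier G" "e = \<phi> d"
proof -
  have "\<phi> ` carrier G = carrier H" using assms(1) unfolding zpow_graph_iso_def bij_betw_def by blast
  then have "e \<in> \<phi> ` carrier G" using assms(2) by simp
  then show ?thesis using that by (auto simp: image_iff)
qed

lemma iso_cn:
  assumes "zpow_graph_iso G H \<phi>" "a \<in> carrier G" "d \<in> carrier G"
  shows "(\<phi> d \<in> cn H (\<phi> a)) = (d \<in> cn G a)"
proof -
  have "(\<phi> d = \<phi> a) = (d = a)" using iso_props(1)[OF assms(1)] assms(2,3) inj_on_eq_iff by metis
  then show ?thesis unfolding cn_def using iso_props(3)[OF assms(1) assms(2,3)] by auto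
qed

lemma tr_sub:
  assumes iso: "zpow_graph_iso G H \<phi>" and abc: "a \<in> carrier G" "b \<in> carrier G" "c \<in> carrier G"
    and sub: "cn G b \<subseteq> cn G a \<union> cn G c"
  shows "cn H (\<phi> b) \<subseteq> cn H (\<phi> a) \<union> cn H (\<phi> c)"
proof
  fix e assume e: "e \<in> cn H (\<phi> b)"
  have "\<phi> b \<in> carrier H" using iso_img[OF iso abc(2)] .
  then have "e \<in> carrier H" using e cn_carrier[of "\<phi> b" H] by blast
  then obtain d where d: "d \<in> carrier G" "e = \<phi> d" using iso_surj[OF iso] by blast
  then have "d \<in> cn G b" using e iso_cn[OF iso abc(2) d(1)] by simp
  then have "d \<in> cn G a \<or> d \<in> cn G c" using sub by blast
  then show "e \<in> cn H (\<phi> a) \<union> cn H (\<phi> c)"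
    using iso_cn[OF iso abc(1) d(1)] iso_cn[OF iso abc(3) d(1)] d(2) by blast
qed

lemma tr_eq:
  assumes iso: "zpow_graph_iso G H \<phi>" and ab: "a \<in> carrier G" "b \<in> carrier G"
    and eq: "cn G a = cn G b"
  shows "cn H (\<phi> a) = cn H (\<phi> b)"
  using tr_sub[OF iso ab(2) ab(1) ab(2)] tr_sub[OF iso ab(1) ab(2) ab(1)] eq by auto

lemma iso_tf:
  assumes G: "group G" and tfG: "torsion_free G" and H: "group H" and iso: "zpow_graph_iso G H \<phi>"
  shows "torsion_free H"
proof -
  interpret G: tfg G using G tfG by (simp add: tfg_def tfg_axioms_def)
  interpret H: group H by (rule H)
  let ?h = "\<phi> \<one>\<^bsub>G\<^esub>"
  have hc: "?h \<in> carrier H" using iso_img[OF iso G.one_closed] .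
  have iso1: "\<not> zpow_adj H ?h b" for b
  proof
    assume adj: "zpow_adj H ?h b"
    then have "b \<in> carrier H" unfolding zpow_adj_def zpow_arc_def by auto
    then obtain d where d: "d \<in> carrier G" "b = \<phi> d" using iso_surj[OF iso] by blast
    then have "zpow_adj G \<one>\<^bsub>G\<^esub> d" using iso_props(3)[OF iso, of "\<one>\<^bsub>G\<^esub>" d] adj by auto
    then show False using G.one_isolated by blast
  qed
  have h1: "?h = \<one>\<^bsub>H\<^esub>"
  proof (rule ccontr)
    assume ne: "?h \<noteq> \<one>\<^bsub>H\<^esub>"
    show False
    proof (cases "inv\<^bsub>H\<^esub> ?h = ?h")
      case False
      have "zpow_arc H ?h (inv\<^bsub>H\<^esub> ?h)" unfolding zpow_arc_def using hc False
        by (auto intro!: exI[of _ "-1"] simp: H.int_pow_neg)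
      then show False using iso1 unfolding zpow_adj_def by blast
    next
      case True
      have "?h [^]\<^bsub>H\<^esub> (2::int) = ?h [^]\<^bsub>H\<^esub> (2::nat)" using int_pow_int[of H ?h 2] by simp
      also have "\<dots> = ?h \<otimes>\<^bsub>H\<^esub> ?h" using hc by (simp add: numeral_2_eq_2)
      also have "\<dots> = ?h \<otimes>\<^bsub>H\<^esub> inv\<^bsub>H\<^esub> ?h" using True by simp
      also have "\<dots> = \<one>\<^bsub>H\<^esub>" using hc by simp
      finally have "zpow_arc H ?h \<one>\<^bsub>H\<^esub>" unfolding zpow_arc_def using hc ne
        by (auto intro!: exI[of _ 2])
      then show False using iso1 unfolding zpow_adj_def by blast
    qed
  qed
  show ?thesis unfolding torsion_free_def
  proof (intro ballI allI impI)
    fix x and n :: nat assume x: "x \<in> carrier H" and n: "n > 0" and e: "x [^]\<^bsub>H\<^esub> n = \<one>\<^bsub>H\<^esub>"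
    show "x = \<one>\<^bsub>H\<^esub>"
    proof (rule ccontr)
      assume "x \<noteq> \<one>\<^bsub>H\<^esub>"
      moreover have "x [^]\<^bsub>H\<^esub> (int n) = \<one>\<^bsub>H\<^esub>" using e by (simp add: int_pow_int)
      ultimately have "zpow_arc H x \<one>\<^bsub>H\<^esub>" unfolding zpow_arc_def using x n
        by (auto intro!: exI[of _ "int n"])
      then show False using iso1 h1 unfolding zpow_adj_def by auto
    qed
  qed
qed

theorem mainTheorem8:
  fixes G :: "('a, 'b) monoid_scheme" and H :: "('c, 'd) monoid_scheme"
    and \<phi> :: "'a \<Rightarrow> 'c" and x y z :: 'a
  assumes "group G" and "torsion_free G"
    and "z \<in> carrier G"
    and "x \<in> O_set G z" and "y \<in> O_set G z"
    and "zpow_arc G x y"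
    and "y \<notin> {x, inv\<^bsub>G\<^esub> x}"
    and "group H"
    and "zpow_graph_iso G H \<phi>"
  shows "zpow_arc H (\<phi> x) (\<phi> y) \<longleftrightarrow> \<phi> ` O_set G z = O_set H (\<phi> z)"
proof -
  note iso = assms(9)
  interpret G: tfg G using assms(1,2) by (simp add: tfg_def tfg_axioms_def)
  interpret H: tfg H using assms(8) iso_tf[OF assms(1,2,8,9)] by (simp add: tfg_def tfg_axioms_def)
  have zc: "z \<in> carrier G" by fact
  have pzx: "pw G z x" using G.O_iff[OF zc] assms(4) by simp
  have pzy: "pw G z y" using G.O_iff[OF zc] assms(5) by simp
  have pxy: "pw G x y" using G.arc_pw assms(6,7) by auto
  have xc: "x \<in> carrier G" and yc: "y \<in> carrier G" using G.pw_props pzx pzy by auto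
  have imc: "\<phi> a \<in> carrier H" if "a \<in> carrier G" for a using iso_img[OF iso that] .
  define w where "w = \<phi> z"
  define u where "u = \<phi> x"
  define v where "v = \<phi> y"
  have wc: "w \<in> carrier H" and uc: "u \<in> carrier H" and vc: "v \<in> carrier H"
    using imc zc xc yc unfolding w_def u_def v_def by auto
  have adjT: "zpow_adj H (\<phi> a) (\<phi> b)" if "pw G a b" for a b
    using iso_props(3)[OF iso, of a b] G.pw_props[OF that] by auto
  have cnT: "cn H (\<phi> a) \<noteq> cn H (\<phi> b)" if hh: "pw G a b" for a b
  proof -
    obtain d where d: "d \<in> carrier G" "d \<in> cn G a" "d \<notin> cn G b" using G.top[OF hh hh] by auto
    have ab: "a \<in> carrier G" "b \<in> carrier G" using G.pw_props[OF that] by auto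
    show ?thesis using iso_cn[OF iso ab(1) d(1)] iso_cn[OF iso ab(2) d(1)] d by auto
  qed
  have casesT: "pw H (\<phi> a) (\<phi> b) \<or> pw H (\<phi> b) (\<phi> a)" if "pw G a b" for a b
    using H.adj_cases'[OF adjT[OF that] cnT[OF that]] .
  have witT: "\<exists>d\<in>carrier H. d \<in> cn H (\<phi> a) \<and> d \<notin> cn H (\<phi> b) \<and> d \<notin> cn H (\<phi> c)"
    if hh: "pw G a b" "pw G a c" for a b c
  proof -
    obtain d where d: "d \<in> carrier G" "d \<in> cn G a" "d \<notin> cn G b" "d \<notin> cn G c" using G.top[OF hh] by auto
    have abc: "a \<in> carrier G" "b \<in> carrier G" "c \<in> carrier G" using G.pw_props that by auto
    show ?thesis using iso_cn[OF iso abc(1) d(1)] iso_cn[OF iso abc(2) d(1)] iso_cn[OF iso abc(3) d(1)] d imc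
      by blast
  qed
  have midT: "cn H (\<phi> b) \<subseteq> cn H (\<phi> a) \<union> cn H (\<phi> c)" if "pw G a b" "pw G b c" for a b c
  proof -
    have abc: "a \<in> carrier G" "b \<in> carrier G" "c \<in> carrier G" using G.pw_props that by auto
    show ?thesis using tr_sub[OF iso abc G.mid[OF that]] .
  qed
  show ?thesis
  proof
    assume arc: "zpow_arc H (\<phi> x) (\<phi> y)"
    have puv: "pw H u v"
    proof -
      have "v \<noteq> inv\<^bsub>H\<^esub> u"
      proof
        assume "v = inv\<^bsub>H\<^esub> u"
        then have "cn H v = cn H u" using H.inv_twin[OF uc] by simp
        then show False using cnT[OF pxy] unfolding u_def v_def by simp
      qed
      then show ?thesis using H.arc_pw[of u v] arc unfolding u_def v_def by blast
    qed
    have pwu: "pw H w u"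
    proof -
      have "\<not> pw H u w"
      proof
        assume "pw H u w"
        then obtain d where "d \<in> cn H u" "d \<notin> cn H w" "d \<notin> cn H v" using H.top[OF _ puv] by blast
        then show False using midT[OF pzx pxy] unfolding u_def v_def w_def by auto
      qed
      then show ?thesis using casesT[OF pzx] unfolding u_def w_def by auto
    qed
    have sub1: "\<phi> ` O_set G z \<subseteq> O_set H w"
    proof
      fix s assume "s \<in> \<phi> ` O_set G z"
      then obtain t where t: "t \<in> O_set G z" "s = \<phi> t" by auto
      have pzt: "pw G z t" using t G.O_iff[OF zc] by simp
      obtain e where e: "pw G x e" "pw G t e" "pw G z e" using G.common[OF pzx pzt] by blast
      have pwe: "pw H w (\<phi> e)"
      proof -
        have "\<not> pw H (\<phi> e) w"
        proof
          assume h: "pw H (\<phi> e) w"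
          have "cn H w \<subseteq> cn H (\<phi> e) \<union> cn H u" using H.mid[OF h pwu] .
          then show False using witT[OF pzx e(3)] unfolding u_def w_def by auto
        qed
        then show ?thesis using casesT[OF e(3)] unfolding w_def by auto
      qed
      have "\<not> pw H (\<phi> t) w"
      proof
        assume h: "pw H (\<phi> t) w"
        have "cn H w \<subseteq> cn H (\<phi> t) \<union> cn H (\<phi> e)" using H.mid[OF h pwe] .
        then show False using witT[OF pzt e(3)] unfolding w_def by auto
      qed
      then have "pw H w (\<phi> t)" using casesT[OF pzt] unfolding w_def by auto
      then show "s \<in> O_set H w" using H.O_iff[OF wc] t by simp
    qed
    have sub2: "O_set H w \<subseteq> \<phi> ` O_set G z"
    proof
      fix s assume s: "s \<in> O_set H w"
      then have pws: "pw H w s" using H.O_iff[OF wc] by simp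
      then have "s \<in> carrier H" using H.pw_props by auto
      then obtain t where t: "t \<in> carrier G" "s = \<phi> t" using iso_surj[OF iso] by blast
      have adj: "zpow_adj G z t" using iso_props(3)[OF iso zc t(1)] H.pw_props(7)[OF pws] t unfolding w_def by simp
      have "cn G z \<noteq> cn G t" using tr_eq[OF iso zc t(1)] H.twin_ne[OF pws] t unfolding w_def by auto
      then have c: "pw G z t \<or> pw G t z" using G.adj_cases'[OF adj] by simp
      have "\<not> pw G t z"
      proof
        assume h: "pw G t z"
        have "cn H w \<subseteq> cn H s \<union> cn H u" using midT[OF h pzx] unfolding w_def u_def t(2) .
        then show False using H.top[OF pws pwu] by blast
      qed
      then have "pw G z t" using c by simp
      then have "t \<in> O_set G z" using G.O_iff[OF zc] by simp
      then show "s \<in> \<phi> ` O_set G z" unfolding t(2) by (rule imageI)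
    qed
    show "\<phi> ` O_set G z = O_set H (\<phi> z)" using sub1 sub2 unfolding w_def by auto
  next
    assume eq: "\<phi> ` O_set G z = O_set H (\<phi> z)"
    have "\<phi> x \<in> \<phi> ` O_set G z" using assms(4) by (rule imageI)
    then have "u \<in> O_set H w" using eq unfolding u_def w_def by simp
    then have pwu: "pw H w u" using H.O_iff[OF wc] by simp
    have "\<not> pw H v u"
    proof
      assume pvu: "pw H v u"
      have finH: "finite ((cn H u \<inter> O_set H w) - cn H v)" using H.fin[OF pwu pvu] .
      have "\<phi> ` ((cn G x \<inter> O_set G z) - cn G y) \<subseteq> (cn H u \<inter> O_set H w) - cn H v"
      proof
        fix s assume "s \<in> \<phi> ` ((cn G x \<inter> O_set G z) - cn G y)"
        then obtain d where d: "d \<in> cn G x" "d \<in> O_set G z" "d \<notin> cn G y" "s = \<phi> d" by auto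
        have dc: "d \<in> carrier G" using d(1) cn_carrier[OF xc] by blast
        have "\<phi> d \<in> \<phi> ` O_set G z" using d(2) by (rule imageI)
        then have "s \<in> O_set H w" using eq d(4) unfolding w_def by simp
        moreover have "s \<in> cn H u" using iso_cn[OF iso xc dc] d(1) d(4) unfolding u_def by simp
        moreover have "s \<notin> cn H v" using iso_cn[OF iso yc dc] d(3) d(4) unfolding v_def by simp
        ultimately show "s \<in> (cn H u \<inter> O_set H w) - cn H v" by blast
      qed
      then have fi: "finite (\<phi> ` ((cn G x \<inter> O_set G z) - cn G y))" using finH by (rule finite_subset)
      have "(cn G x \<inter> O_set G z) - cn G y \<subseteq> carrier G" using cn_carrier[OF xc] by blast
      then have "inj_on \<phi> ((cn G x \<inter> O_set G z) - cn G y)"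
        by (rule inj_on_subset[OF iso_props(1)[OF iso]])
      then have "finite ((cn G x \<inter> O_set G z) - cn G y)" using fi finite_imageD by blast
      then show False using G.inf[OF pzx pxy] by simp
    qed
    then have "pw H u v" using casesT[OF pxy] unfolding u_def v_def by auto
    then show "zpow_arc H (\<phi> x) (\<phi> y)" using H.pw_props unfolding u_def v_def by auto
  qed
qed

end
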